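(* In the setting described in the context, fix $\vartheta\in(0,\infty)$, write $\mathrm{range}(f')=(a,b)$ and let $g:(a,b)\to(0,\infty)$ be the inverse of $f'$; for $c\in\mathbb{R}$ put $I_c=\{\vartheta^{-1}y+c: y\in(a,b)\}$. If $f'(x)\to\infty$ as $x\to\infty$ and, for every $c\in\mathbb{R}$, the random variable $g\bigl(\vartheta(\ell(T,\cdot)-c)\bigr)\mathbf{1}_{\{\ell(T,\cdot)\in I_c\}}$ is $\mathsf{P}$-integrable, then there exist a constant $c\in\mathbb{R}$ and a function $z:\mathbb{R}\to\mathbb{R}_+$ such that $x-f'(z(x))/\vartheta=c$ for $x\in I_c$, $z(x)=0$ for $x\notin I_c$, $\mathsf{E}\bigl(z(\ell(T,\cdot))\bigr)=1$ and $\mathsf{P}\bigl(\ell(T,\cdot)<\sup I_c\bigr)=1$.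
   Context: Fix $T\in(0,\infty)$, $d\in\mathbb{N}$, let $\Omega=D([0,T],\mathbb{R}^d)$ be the set of càdlàg paths with canonical process $X(t)(\omega)=\omega(t)$ and natural filtration $(\mathcal{F}^0_t)$. $\mathsf{P}$ is a probability measure on $(\Omega,\mathcal{F}^0_T)$ with $\mathsf{P}(X(0)=0)=1$; $\mathsf{E}$ denotes $\mathsf{P}$-expectation. $f:\mathbb{R}_+\to\mathbb{R}$ is twice differentiable and strictly convex with $f(1)=0$, so $f'$ is continuous strictly increasing on $(0,\infty)$ and its range is an open interval $(a,b)$ ($a,b$ possibly infinite). $\ell:[0,T]\times\Omega\to\mathbb{R}$ is a non-anticipative functional (measurable with $\ell(t,\omega)=\ell(t,\omega(t\wedge\cdot))$) with $\ell(0,0)=0$; $\ell(T,\cdot)$ is the terminal loss. *)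

theory Defs
  imports "HOL-Probability.Probability"
begin

definition strictly_convex_on :: "real set \<Rightarrow> (real \<Rightarrow> real) \<Rightarrow> bool" where
  "strictly_convex_on S f \<longleftrightarrow> convex S \<and>
     (\<forall>x\<in>S. \<forall>y\<in>S. \<forall>u. x \<noteq> y \<and> 0 < u \<and> u < 1 \<longrightarrow>
        f (u * x + (1 - u) * y) < u * f x + (1 - u) * f y)"

text \<open>Skorokhod space D([0,T], R^d). A path is a function on the reals which is
  extended constantly outside [0,T] (canonical representative), right-continuous
  on [0,T) and with left limits on (0,T].\<close>
definition cadlag_paths :: "real \<Rightarrow> (real \<Rightarrow> 'a::topological_space) set" where
  "cadlag_paths T = {\<omega>. (\<forall>s. \<omega> s = \<omega> (max 0 (min T s)))
      \<and> (\<forall>t\<in>{0..<T}. continuous (at_right t) \<omega>)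
      \<and> (\<forall>t\<in>{0<..T}. \<exists>l. (\<omega> \<longlongrightarrow> l) (at_left t))}"

text \<open>Generators of the natural filtration F^0_t of the canonical process X(s)(w) = w(s).\<close>
definition coord_gen :: "real \<Rightarrow> real \<Rightarrow> (real \<Rightarrow> 'a::topological_space) set set" where
  "coord_gen T t = {{\<omega>\<in>cadlag_paths T. \<omega> s \<in> B} | s B. s \<in> {0..t} \<and> B \<in> sets borel}"

definition canon_space :: "real \<Rightarrow> real \<Rightarrow> (real \<Rightarrow> 'a::topological_space) measure" where
  "canon_space T t = sigma (cadlag_paths T) (coord_gen T t)"

definition non_anticipative ::
  "real \<Rightarrow> (real \<Rightarrow> (real \<Rightarrow> 'a::topological_space) \<Rightarrow> real) \<Rightarrow> bool" where
  "non_anticipative T l \<longleftrightarrow>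
     (\<lambda>(t,\<omega>). l t \<omega>) \<in> borel_measurable (restrict_space borel {0..T} \<Otimes>\<^sub>M canon_space T T)
     \<and> (\<forall>t\<in>{0..T}. \<forall>\<omega>\<in>cadlag_paths T. l t \<omega> = l t (\<lambda>s. \<omega> (min t s)))"

end

theory Submission
  imports Defs
begin

lemma secant_bound:
  fixes f :: "real \<Rightarrow> real"
  assumes xm: "x \<noteq> m" and D: "(f has_real_derivative D) (at x)"
    and conv: "\<And>u. 0 < u \<Longrightarrow> u < 1 \<Longrightarrow> f (x + u * (m - x)) \<le> f x + u * (f m - f x)"
  shows "D * (m - x) \<le> f m - f x"
proof -
  have k: "((\<lambda>u. f (x + u * (m - x))) has_real_derivative D * (m - x)) (at 0)"
  proof -
    have "((\<lambda>u. x + u * (m - x)) has_real_derivative m - x) (at 0)"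
      by (auto intro!: derivative_eq_intros)
    from DERIV_chain2[of f D "\<lambda>u. x + u * (m - x)" 0, OF _ this] D show ?thesis by simp
  qed
  then have "((\<lambda>h. (f (x + h * (m - x)) - f x) / h) \<longlongrightarrow> D * (m - x)) (at 0)"
    unfolding DERIV_def by simp
  then have lim: "((\<lambda>h. (f (x + h * (m - x)) - f x) / h) \<longlongrightarrow> D * (m - x)) (at_right 0)"
    by (rule tendsto_mono[OF at_le, rotated]) auto
  have ev: "eventually (\<lambda>h. (f (x + h * (m - x)) - f x) / h \<le> f m - f x) (at_right 0)"
  proof -
    have "eventually (\<lambda>h::real. 0 < h \<and> h < 1) (at_right 0)"
      unfolding eventually_at_right_field by (intro exI[of _ 1]) auto
    then show ?thesis
    proof eventually_elim
      case (elim h)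
      then show ?case using conv[of h] by (simp add: divide_simps mult.commute)
    qed
  qed
  show ?thesis
    using tendsto_upperbound[OF lim ev] by simp
qed


lemma deriv_strict_mono:
  fixes f f' :: "real \<Rightarrow> real"
  assumes sc: "strictly_convex_on {0..} f"
    and der: "\<And>x. 0 < x \<Longrightarrow> (f has_real_derivative f' x) (at x)"
    and xy: "0 < x" "x < y"
  shows "f' x < f' y"
proof -
  define m where "m = (x + y) / 2"
  have conv: "f (p + u * (q - p)) \<le> f p + u * (f q - f p)"
    if "0 < p" "0 < q" "p \<noteq> q" "0 < u" "u < 1" for p q u
  proof -
    have "f (u * q + (1 - u) * p) < u * f q + (1 - u) * f p"
      using sc that unfolding strictly_convex_on_def by auto
    moreover have "u * q + (1 - u) * p = p + u * (q - p)" by algebra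
    ultimately show ?thesis by (simp add: algebra_simps)
  qed
  have m: "x < m" "m < y" using xy by (auto simp: m_def)
  have 1: "f' x * (m - x) \<le> f m - f x"
    by (rule secant_bound) (use m xy der conv in auto)
  have 2: "f' y * (m - y) \<le> f m - f y"
    by (rule secant_bound) (use m xy der conv in auto)
  have H: "\<forall>p\<in>{0..}. \<forall>q\<in>{0..}. \<forall>u. p \<noteq> q \<and> 0 < u \<and> u < 1 \<longrightarrow>
        f (u * p + (1 - u) * q) < u * f p + (1 - u) * f q"
    using sc by (simp add: strictly_convex_on_def)
  have "f ((1/2) * x + (1 - 1/2) * y) < (1/2) * f x + (1 - 1/2) * f y"
    using H[rule_format, of x y "1/2"] xy by simp
  moreover have "(1/2) * x + (1 - 1/2) * y = m" by (simp add: m_def)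
  ultimately have 3: "f m < (f x + f y) / 2" by (simp add: m_def add_divide_distrib)
  have d: "m - x = (y - x) / 2" "m - y = - ((y - x) / 2)" by (auto simp: m_def field_simps)
  have "f' x * ((y - x) / 2) < f' y * ((y - x) / 2)"
  proof -
    have 1: "f' x * ((y - x) / 2) \<le> f m - f x" using 1 d by simp
    have 2: "f y - f m \<le> f' y * ((y - x) / 2)" using 2 d by simp
    have "f m - f x < f y - f m" using 3 by (simp add: field_simps)
    then show ?thesis using 1 2 by linarith
  qed
  then show ?thesis using xy by simp
qed

theorem proposition4p5:
  fixes T \<theta> :: real
    and P :: "(real \<Rightarrow> real ^ 'd::finite) measure"
    and f f' f'' :: "real \<Rightarrow> real"
    and a b :: ereal
    and l :: "real \<Rightarrow> (real \<Rightarrow> real ^ 'd) \<Rightarrow> real"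
  defines "g \<equiv> the_inv_into {0<..} f'"
    and "I \<equiv> (\<lambda>c::real. {y / \<theta> + c | y. a < ereal y \<and> ereal y < b})"
  assumes T_pos: "0 < T"
    and P_prob: "prob_space P"
    and P_space: "space P = cadlag_paths T"
    and P_sets: "sets P = sets (canon_space T T)"
    and P_start: "measure P {\<omega>\<in>space P. \<omega> 0 = 0} = 1"
    and f_deriv: "\<And>x. 0 < x \<Longrightarrow> (f has_real_derivative f' x) (at x)"
    and f'_deriv: "\<And>x. 0 < x \<Longrightarrow> (f' has_real_derivative f'' x) (at x)"
    and f_strict_convex: "strictly_convex_on {0..} f"
    and f_one: "f 1 = 0"
    and f'_range: "f' ` {0<..} = {y. a < ereal y \<and> ereal y < b}"
    and l_na: "non_anticipative T l"
    and l_zero: "l 0 (\<lambda>_. 0) = 0"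
    and theta_pos: "0 < \<theta>"
    and f'_infty: "filterlim f' at_top at_top"
    and integrable: "\<And>c::real. integrable P
        (\<lambda>\<omega>. g (\<theta> * (l T \<omega> - c)) * indicator (I c) (l T \<omega>))"
  shows "\<exists>(c::real) (z::real \<Rightarrow> real).
           (\<forall>x. 0 \<le> z x)
         \<and> (\<forall>x\<in>I c. 0 < z x \<and> x - f' (z x) / \<theta> = c)
         \<and> (\<forall>x. x \<notin> I c \<longrightarrow> z x = 0)
         \<and> (\<integral>\<omega>. z (l T \<omega>) \<partial>P) = 1
         \<and> measure P {\<omega>\<in>space P. ereal (l T \<omega>) < Sup (ereal ` I c)} = 1"
proof -
  interpret prob_space P by (rule P_prob)
  have fmono: "f' x < f' y" if "0 < x" "x < y" for x y
    using deriv_strict_mono[OF f_strict_convex f_deriv] that by blast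
  have inj: "inj_on f' {0<..}"
  proof (rule inj_onI)
    fix x y :: real assume "x \<in> {0<..}" "y \<in> {0<..}" "f' x = f' y"
    then show "x = y" using fmono[of x y] fmono[of y x] by (cases x y rule: linorder_cases) auto
  qed
  have a_lt: "a < ereal (f' x)" if "0 < x" for x
    using f'_range that by auto
  have b_inf: "b = \<infinity>"
  proof (rule ccontr)
    assume "b \<noteq> \<infinity>"
    then obtain r where r: "b \<le> ereal r" by (cases b) auto
    from f'_infty have "eventually (\<lambda>x. f' x > r) at_top"
      by (simp add: filterlim_at_top_dense)
    then obtain N where N: "\<And>x. x \<ge> N \<Longrightarrow> f' x > r"
      by (auto simp: eventually_at_top_linorder)
    define x where "x = max N 1"
    have "f' x \<in> f' ` {0<..}" by (auto simp: x_def)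
    then have "ereal (f' x) < b" using f'_range by auto
    moreover have "ereal r < ereal (f' x)" using N[of x] by (simp add: x_def)
    ultimately show False using r by (meson order_less_le_trans order_less_asym)
  qed
  have rng: "y \<in> f' ` {0<..}" if "a < ereal y" for y
    using that f'_range b_inf by auto
  have g_pos: "0 < g y" if "a < ereal y" for y
    using the_inv_into_into[OF inj rng[OF that]] unfolding g_def by auto
  have g_inv: "f' (g y) = y" if "a < ereal y" for y
    using f_the_inv_into_f[OF inj rng[OF that]] unfolding g_def by auto
  have g_f: "g (f' x) = x" if "0 < x" for x
    using the_inv_into_f_f[OF inj] that unfolding g_def by auto
  have g_mono: "g y1 < g y2" if "a < ereal y1" "y1 < y2" for y1 y2
  proof (rule ccontr)
    assume "\<not> g y1 < g y2"
    then have "g y2 \<le> g y1" by simp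
    moreover have a2: "a < ereal y2" using that by (meson ereal_less_le less_imp_le order_less_le_trans ereal_less_eq(3))
    ultimately have "f' (g y2) \<le> f' (g y1)"
      using fmono[of "g y2" "g y1"] g_pos[OF a2] by (cases "g y2 = g y1") auto
    then show False using g_inv[OF that(1)] g_inv[OF a2] that(2) by simp
  qed
  define G where "G y = (if a < ereal y then g y else 0)" for y
  have G_nn: "0 \<le> G y" for y using g_pos by (auto simp: G_def less_imp_le)
  have G_mono: "G y1 \<le> G y2" if "y1 \<le> y2" for y1 y2
  proof (cases "a < ereal y1")
    case True
    then have "a < ereal y2" using that by (meson ereal_less_eq(3) order_less_le_trans)
    then show ?thesis using True g_mono[of y1 y2] that by (cases "y1 = y2") (auto simp: G_def)
  next
    case False
    then show ?thesis using G_nn[of y2] by (simp add: G_def)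
  qed
  have G_small: "G y < e" if "0 < e" "y < f' e" for e y
  proof (cases "a < ereal y")
    case True
    then have "g y < g (f' e)" using g_mono that by blast
    then show ?thesis using True g_f[OF that(1)] by (simp add: G_def)
  qed (use that in \<open>simp add: G_def\<close>)
  have G_big: "K \<le> G y" if "0 < K" "f' K \<le> y" for K y
  proof -
    have ay: "a < ereal y" using a_lt[OF that(1)] that(2) by (meson ereal_less_eq(3) order_less_le_trans)
    have "g (f' K) \<le> g y"
      using g_mono[OF a_lt[OF that(1)], of y] that(2) by (cases "f' K = y") auto
    then show ?thesis using ay g_f[OF that(1)] by (simp add: G_def)
  qed
  have G_cont: "isCont G y" for y
  proof (cases "a < ereal y")
    case True
    define x where "x = g y"
    have x: "0 < x" "f' x = y" using g_pos[OF True] g_inv[OF True] by (auto simp: x_def)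
    have "isCont g (f' x)"
    proof (rule isCont_inverse_function2[of "x/2" x "2*x"])
      show "x / 2 < x" "x < 2 * x" using x by auto
      show "g (f' z) = z" if "x / 2 \<le> z" "z \<le> 2 * x" for z using g_f that x by auto
      show "isCont f' z" if "x / 2 \<le> z" "z \<le> 2 * x" for z
        using f'_deriv[of z] that x by (auto intro: DERIV_isCont)
    qed
    then have gc: "isCont g y" using x by simp
    have op: "open {y. a < ereal y}"
    proof -
      have "{y. a < ereal y} = ereal -` {a<..}" by auto
      moreover have "open (ereal -` {a<..})" by (intro open_vimage) (auto intro: continuous_on_ereal)
      ultimately show ?thesis by simp
    qed
    have "eventually (\<lambda>y'. a < ereal y') (nhds y)"
      using eventually_nhds_in_open[OF op, of y] True by simp
    then have "eventually (\<lambda>y'. G y' = g y') (nhds y)"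
      by eventually_elim (simp add: G_def)
    then show ?thesis using gc isCont_cong by blast
  next
    case False
    then have G0: "G y = 0" by (simp add: G_def)
    show ?thesis
      unfolding isCont_def G0 tendsto_iff
    proof (intro allI impI)
      fix e :: real assume e: "0 < e"
      have "ereal y < ereal (f' e)" using False a_lt[OF e] by (meson not_less order_le_less_trans)
      then have "y < f' e" by simp
      then have "eventually (\<lambda>y'. y' < f' e) (at y)"
        using order_tendstoD(2)[OF tendsto_ident_at] by blast
      then show "eventually (\<lambda>y'. dist (G y') 0 < e) (at y)"
        by eventually_elim (use G_small G_nn e in auto)
    qed
  qed
  have memI: "x \<in> I c \<longleftrightarrow> a < ereal (\<theta> * (x - c))" for x c
  proof
    assume "x \<in> I c"
    then obtain y where "x = y / \<theta> + c" "a < ereal y" unfolding I_def by auto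
    then show "a < ereal (\<theta> * (x - c))" using theta_pos by simp
  next
    assume "a < ereal (\<theta> * (x - c))"
    then show "x \<in> I c" unfolding I_def b_inf using theta_pos
      by (intro CollectI exI[of _ "\<theta> * (x - c)"]) auto
  qed
  define H where "H c \<omega> = G (\<theta> * (l T \<omega> - c))" for c \<omega>
  have H_eq: "(\<lambda>\<omega>. g (\<theta> * (l T \<omega> - c)) * indicator (I c) (l T \<omega>)) = H c" for c
    by (auto simp: H_def G_def memI indicator_def)
  have Hint: "integrable P (H c)" for c using integrable[of c] H_eq by simp
  have Hmeas: "H c \<in> borel_measurable P" for c using Hint by (rule borel_measurable_integrable)
  have H_anti: "H c' \<omega> \<le> H c \<omega>" if "c \<le> c'" for c c' \<omega>
    unfolding H_def using that theta_pos by (intro G_mono mult_left_mono) auto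
  define \<phi> where "\<phi> c = (\<integral>\<omega>. H c \<omega> \<partial>P)" for c
  have \<phi>_anti: "\<phi> c' \<le> \<phi> c" if "c \<le> c'" for c c'
    unfolding \<phi>_def using that by (intro integral_mono Hint H_anti)
  have \<phi>_cont: "isCont \<phi> c0" for c0
    unfolding continuous_at_sequentially comp_def
  proof (intro allI impI)
    fix X :: "nat \<Rightarrow> real" assume X: "X \<longlonglongrightarrow> c0"
    define Y where "Y n = max (c0 - 1) (min (c0 + 1) (X n))" for n
    have "(\<lambda>n. max (c0 - 1) (min (c0 + 1) (X n))) \<longlonglongrightarrow> max (c0 - 1) (min (c0 + 1) c0)"
      by (intro tendsto_max tendsto_min tendsto_const X)
    then have Y: "Y \<longlonglongrightarrow> c0" unfolding Y_def by simp
    have "eventually (\<lambda>n. X n > c0 - 1) sequentially" by (rule order_tendstoD(1)[OF X]) simp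
    moreover have "eventually (\<lambda>n. X n < c0 + 1) sequentially" by (rule order_tendstoD(2)[OF X]) simp
    ultimately have ev: "eventually (\<lambda>n. \<phi> (Y n) = \<phi> (X n)) sequentially"
      by eventually_elim (simp add: Y_def)
    have "(\<lambda>n. \<phi> (Y n)) \<longlonglongrightarrow> \<phi> c0"
      unfolding \<phi>_def
    proof (rule integral_dominated_convergence[OF Hmeas Hmeas Hint[of "c0 - 1"]])
      show "AE \<omega> in P. (\<lambda>n. H (Y n) \<omega>) \<longlonglongrightarrow> H c0 \<omega>"
      proof (rule AE_I2)
        fix \<omega>
        have "(\<lambda>n. \<theta> * (l T \<omega> - Y n)) \<longlonglongrightarrow> \<theta> * (l T \<omega> - c0)"
          by (intro tendsto_intros Y)
        then show "(\<lambda>n. H (Y n) \<omega>) \<longlonglongrightarrow> H c0 \<omega>"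
          unfolding H_def by (rule isCont_tendsto_compose[OF G_cont])
      qed
      show "AE \<omega> in P. norm (H (Y n) \<omega>) \<le> H (c0 - 1) \<omega>" for n
        using H_anti[of "c0 - 1" "Y n"] G_nn by (intro AE_I2) (auto simp: Y_def H_def)
    qed
    then show "(\<lambda>n. \<phi> (X n)) \<longlonglongrightarrow> \<phi> c0" using tendsto_cong[OF ev] by simp
  qed
  have ex_lt: "\<exists>c. \<phi> c < 1"
  proof -
    have "((\<lambda>t. \<phi> t) \<longlongrightarrow> (\<integral>\<omega>. 0 \<partial>P)) at_top"
      unfolding \<phi>_def
    proof (rule integral_dominated_convergence_at_top[OF _ Hmeas Hint[of 0]])
      show "(\<lambda>\<omega>. 0::real) \<in> borel_measurable P" by simp
      show "AE \<omega> in P. ((\<lambda>t. H t \<omega>) \<longlongrightarrow> 0) at_top"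
      proof (rule AE_I2)
        fix \<omega>
        show "((\<lambda>t. H t \<omega>) \<longlongrightarrow> 0) at_top"
          unfolding tendsto_iff
        proof (intro allI impI)
          fix e :: real assume e: "0 < e"
          have "eventually (\<lambda>t. t \<ge> l T \<omega> - f' e / \<theta> + 1) at_top" by simp
          then show "eventually (\<lambda>t. dist (H t \<omega>) 0 < e) at_top"
          proof eventually_elim
            case (elim t)
            then have "l T \<omega> - t \<le> f' e / \<theta> - 1" by simp
            then have "\<theta> * (l T \<omega> - t) \<le> \<theta> * (f' e / \<theta> - 1)"
              using theta_pos by (intro mult_left_mono) auto
            also have "\<dots> = f' e - \<theta>" using theta_pos by (simp add: field_simps)
            finally have "\<theta> * (l T \<omega> - t) < f' e" using theta_pos by simp
            then show ?case using G_small[OF e] G_nn by (simp add: H_def)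
          qed
        qed
      qed
      have "eventually (\<lambda>t. t \<ge> (0::real)) at_top" by simp
      then show "\<forall>\<^sub>F t in at_top. AE \<omega> in P. norm (H t \<omega>) \<le> H 0 \<omega>"
      proof eventually_elim
        case (elim t)
        show ?case
        proof (rule AE_I2)
          fix \<omega>
          show "norm (H t \<omega>) \<le> H 0 \<omega>"
            using H_anti[OF elim, of \<omega>] G_nn[of "\<theta> * (l T \<omega> - t)"] by (simp add: H_def)
        qed
      qed
    qed
    then have "((\<lambda>t. \<phi> t) \<longlongrightarrow> 0) at_top" by simp
    then have "eventually (\<lambda>t. \<phi> t < 1) at_top" by (rule order_tendstoD(2)) simp
    then show ?thesis by (auto simp: eventually_at_top_linorder)
  qed
  have ex_gt: "\<exists>c. \<phi> c > 1"
  proof -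
    have "((\<lambda>t. \<integral>\<omega>. min (H (- t) \<omega>) 2 \<partial>P) \<longlongrightarrow> (\<integral>\<omega>. 2 \<partial>P)) at_top"
    proof (rule integral_dominated_convergence_at_top[where w="\<lambda>_. 2"])
      show "(\<lambda>\<omega>. 2::real) \<in> borel_measurable P" by simp
      show "(\<lambda>\<omega>. min (H (- t) \<omega>) 2) \<in> borel_measurable P" for t
        using Hmeas[of "-t"] by measurable
      show "integrable P (\<lambda>\<omega>. 2::real)" by simp
      show "AE \<omega> in P. ((\<lambda>t. min (H (- t) \<omega>) 2) \<longlongrightarrow> 2) at_top"
      proof (rule AE_I2)
        fix \<omega>
        have "eventually (\<lambda>t. t \<ge> f' 2 / \<theta> - l T \<omega>) at_top" by simp
        then have "eventually (\<lambda>t. min (H (- t) \<omega>) 2 = 2) at_top"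
        proof eventually_elim
          case (elim t)
          then have "f' 2 / \<theta> \<le> l T \<omega> - - t" by simp
          then have "\<theta> * (f' 2 / \<theta>) \<le> \<theta> * (l T \<omega> - - t)"
            using theta_pos by (intro mult_left_mono) auto
          then have "f' 2 \<le> \<theta> * (l T \<omega> - - t)" using theta_pos by simp
          then show ?case using G_big[of 2] by (simp add: H_def)
        qed
        then show "((\<lambda>t. min (H (- t) \<omega>) 2) \<longlongrightarrow> 2) at_top" by (rule tendsto_eventually)
      qed
      show "\<forall>\<^sub>F t in at_top. AE \<omega> in P. norm (min (H (- t) \<omega>) 2) \<le> 2"
        using G_nn by (intro always_eventually allI AE_I2) (auto simp: H_def)
    qed
    then have "((\<lambda>t. \<integral>\<omega>. min (H (- t) \<omega>) 2 \<partial>P) \<longlongrightarrow> 2) at_top"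
      using prob_space by simp
    then have "eventually (\<lambda>t. (\<integral>\<omega>. min (H (- t) \<omega>) 2 \<partial>P) > 1) at_top"
      by (rule order_tendstoD(1)) simp
    then obtain t where t: "(\<integral>\<omega>. min (H (- t) \<omega>) 2 \<partial>P) > 1"
      by (auto simp: eventually_at_top_linorder)
    have "(\<integral>\<omega>. min (H (- t) \<omega>) 2 \<partial>P) \<le> \<phi> (- t)"
      unfolding \<phi>_def by (intro integral_mono integrable_min Hint) auto
    then have "1 < \<phi> (- t)" using t by linarith
    then show ?thesis by blast
  qed
  obtain c1 where c1: "\<phi> c1 > 1" using ex_gt by blast
  obtain c2 where c2: "\<phi> c2 < 1" using ex_lt by blast
  have "c1 \<le> c2"
  proof (rule ccontr)
    assume "\<not> c1 \<le> c2"
    then have "\<phi> c1 \<le> \<phi> c2" using \<phi>_anti by simp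
    then show False using c1 c2 by simp
  qed
  then obtain c where c: "\<phi> c = 1"
    using IVT2[of \<phi> c2 1 c1] c1 c2 \<phi>_cont by force
  define z where "z x = G (\<theta> * (x - c))" for x
  show ?thesis
  proof (intro exI[of _ c] exI[of _ z] conjI ballI allI impI)
    show "0 \<le> z x" for x using G_nn by (simp add: z_def)
    fix x assume "x \<in> I c"
    then have ax: "a < ereal (\<theta> * (x - c))" using memI by simp
    show "0 < z x" using g_pos[OF ax] ax by (simp add: z_def G_def)
    show "x - f' (z x) / \<theta> = c" using g_inv[OF ax] ax theta_pos by (simp add: z_def G_def)
  next
    show "z x = 0" if "x \<notin> I c" for x using that memI by (simp add: z_def G_def)
  next
    show "(\<integral>\<omega>. z (l T \<omega>) \<partial>P) = 1" using c by (simp add: \<phi>_def H_def z_def)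
  next
    have "{\<omega> \<in> space P. ereal (l T \<omega>) < Sup (ereal ` I c)} = space P"
    proof (intro set_eqI iffI)
      fix \<omega> assume \<omega>: "\<omega> \<in> space P"
      define y where "y = max (f' 1) (\<theta> * (l T \<omega> - c) + 1)"
      have ay: "a < ereal y" using a_lt[of 1] unfolding y_def
        by (meson ereal_less_eq(3) max.cobounded1 order_less_le_trans zero_less_one)
      have "y / \<theta> + c \<in> I c" unfolding I_def b_inf using ay by auto
      moreover have "l T \<omega> < y / \<theta> + c"
      proof -
        have "\<theta> * (l T \<omega> - c) < y" unfolding y_def by simp
        then have "l T \<omega> - c < y / \<theta>" using theta_pos by (simp add: field_simps)
        then show ?thesis by simp
      qed
      ultimately have "\<exists>x\<in>ereal ` I c. ereal (l T \<omega>) < x" by force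
      then show "\<omega> \<in> {\<omega> \<in> space P. ereal (l T \<omega>) < Sup (ereal ` I c)}"
        using \<omega> by (simp add: less_Sup_iff)
    qed auto
    then show "measure P {\<omega> \<in> space P. ereal (l T \<omega>) < Sup (ereal ` I c)} = 1"
      using prob_space by simp
  qed
qed

end
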